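(* Let $A\in\mathbb{C}^{m\times n}$ have rank $r$, $B\in\mathbb{C}^{m\times n}$ have rank $s$, and $E=B-A$. Then $$\|B^{\dagger}-A^{\dagger}\|_{F}^{2}\geq\max\big\{\alpha'_{1}+\|B^{\dagger}EA^{\dagger}\|_{F}^{2},\ \alpha'_{2}+\|A^{\dagger}EB^{\dagger}\|_{F}^{2}\big\},$$ where $$\alpha'_{1}:=\frac{\|A^{\dagger}E\|_{F}^{2}-\|A^{\dagger}EB^{\dagger}B\|_{F}^{2}}{\|A\|_{2}^{2}}+\frac{\|EB^{\dagger}\|_{F}^{2}-\|AA^{\dagger}EB^{\dagger}\|_{F}^{2}}{\|B\|_{2}^{2}},$$ $$\alpha'_{2}:=\frac{\|EA^{\dagger}\|_{F}^{2}-\|BB^{\dagger}EA^{\dagger}\|_{F}^{2}}{\|A\|_{2}^{2}}+\frac{\|B^{\dagger}E\|_{F}^{2}-\|B^{\dagger}EA^{\dagger}A\|_{F}^{2}}{\|B\|_{2}^{2}}.$$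
   Context: $M^{\dagger}$ denotes the Moore–Penrose inverse of $M$, $\|\cdot\|_{2}$ the spectral norm and $\|\cdot\|_{F}$ the Frobenius norm. *)

theory Defs
  imports "HOL-Analysis.Analysis"
begin

text \<open>Complex m x n matrices are modelled as complex ^'n ^'m (rows indexed by 'm).\<close>

definition cmat_adj :: "complex ^'n ^'m \<Rightarrow> complex ^'m ^'n" where
  "cmat_adj A = (\<chi> i j. cnj (A $ j $ i))"

definition penrose :: "complex ^'n ^'m \<Rightarrow> complex ^'m ^'n \<Rightarrow> bool" where
  "penrose A X \<longleftrightarrow> A ** X ** A = A \<and> X ** A ** X = X \<and>
     cmat_adj (A ** X) = A ** X \<and> cmat_adj (X ** A) = X ** A"

definition mp_inv :: "complex ^'n ^'m \<Rightarrow> complex ^'m ^'n" where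
  "mp_inv A = (THE X. penrose A X)"

definition spec_norm :: "complex ^'n ^'m \<Rightarrow> real" where
  "spec_norm A = onorm (\<lambda>x. A *v x)"

definition frob_norm :: "complex ^'n ^'m \<Rightarrow> real" where
  "frob_norm A = sqrt (\<Sum>i\<in>UNIV. \<Sum>j\<in>UNIV. (cmod (A $ i $ j))\<^sup>2)"

end

theory Submission
  imports Defs
begin
type_synonym ('n,'m) cm = "complex^'n^'m"

lemma frob_eq_norm: "frob_norm A = norm A"
  unfolding frob_norm_def norm_vec_def L2_set_def
  by (simp add: real_sqrt_pow2 sum_nonneg)

lemma adj_nth[simp]: "cmat_adj A $ i $ j = cnj (A $ j $ i)"
  by (simp add: cmat_adj_def)

lemma adj_adj[simp]: "cmat_adj (cmat_adj A) = A"
  by (simp add: vec_eq_iff)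

lemma adj_mult: "cmat_adj (A ** B) = cmat_adj B ** cmat_adj A"
  by (simp add: vec_eq_iff matrix_matrix_mult_def mult.commute)

lemma adj_add: "cmat_adj (A + B) = cmat_adj A + cmat_adj B"
  by (simp add: vec_eq_iff)
lemma adj_diff: "cmat_adj (A - B) = cmat_adj A - cmat_adj B"
  by (simp add: vec_eq_iff)
lemma adj_uminus: "cmat_adj (- A) = - cmat_adj A"
  by (simp add: vec_eq_iff)
lemma adj_zero[simp]: "cmat_adj 0 = 0"
  by (simp add: vec_eq_iff)
lemma adj_id[simp]: "cmat_adj (mat 1) = mat 1"
  by (simp add: vec_eq_iff mat_def)
lemma adj_scaleR: "cmat_adj (c *\<^sub>R A) = c *\<^sub>R cmat_adj A"
  by (simp add: vec_eq_iff complex_cnj_scaleR)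

lemma norm_sq_entries: "(norm (Z::complex^'n^'m))\<^sup>2 = (\<Sum>i\<in>UNIV. \<Sum>j\<in>UNIV. (cmod (Z $ i $ j))\<^sup>2)"
  by (simp add: frob_eq_norm[symmetric] frob_norm_def sum_nonneg)

lemma norm_adj: "norm (cmat_adj A) = norm A"
proof -
  have "(\<Sum>i\<in>UNIV. \<Sum>j\<in>UNIV. (cmod (cmat_adj A $ i $ j))\<^sup>2) = (\<Sum>i\<in>UNIV. \<Sum>j\<in>UNIV. (cmod (A $ i $ j))\<^sup>2)"
    by (subst sum.swap) simp
  then have "(norm (cmat_adj A))\<^sup>2 = (norm A)\<^sup>2" by (simp only: norm_sq_entries)
  then show ?thesis by (rule power2_eq_imp_eq) simp_all
qed

lemma inner_cplx: "inner (x::complex) y = Re (x * cnj y)"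
  by (simp add: inner_complex_def)

lemma inner_mult_adj: "inner (M ** X) Y = inner X (cmat_adj M ** Y)"
proof -
  have "inner (M ** X) Y = (\<Sum>i\<in>UNIV. \<Sum>j\<in>UNIV. \<Sum>k\<in>UNIV. Re (M$i$k * X$k$j * cnj (Y$i$j)))"
    by (simp add: inner_vec_def matrix_matrix_mult_def inner_cplx sum_distrib_right Re_sum)
  also have "\<dots> = (\<Sum>i\<in>UNIV. \<Sum>k\<in>UNIV. \<Sum>j\<in>UNIV. Re (M$i$k * X$k$j * cnj (Y$i$j)))"
    by (rule sum.cong[OF refl], rule sum.swap)
  also have "\<dots> = (\<Sum>k\<in>UNIV. \<Sum>i\<in>UNIV. \<Sum>j\<in>UNIV. Re (M$i$k * X$k$j * cnj (Y$i$j)))"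
    by (rule sum.swap)
  also have "\<dots> = (\<Sum>k\<in>UNIV. \<Sum>j\<in>UNIV. \<Sum>i\<in>UNIV. Re (M$i$k * X$k$j * cnj (Y$i$j)))"
    by (rule sum.cong[OF refl], rule sum.swap)
  also have "\<dots> = inner X (cmat_adj M ** Y)"
    by (simp add: inner_vec_def matrix_matrix_mult_def inner_cplx sum_distrib_left Re_sum mult_ac)
  finally show ?thesis .
qed

lemma inner_vec_adj: "inner (M *v y) x = inner y (cmat_adj M *v x)"
proof -
  have "inner (M *v y) x = (\<Sum>i\<in>UNIV. \<Sum>k\<in>UNIV. Re (M$i$k * y$k * cnj (x$i)))"
    by (simp add: inner_vec_def matrix_vector_mult_def inner_cplx sum_distrib_right Re_sum)
  also have "\<dots> = (\<Sum>k\<in>UNIV. \<Sum>i\<in>UNIV. Re (M$i$k * y$k * cnj (x$i)))"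
    by (rule sum.swap)
  also have "\<dots> = inner y (cmat_adj M *v x)"
    by (simp add: inner_vec_def matrix_vector_mult_def inner_cplx sum_distrib_left Re_sum mult_ac)
  finally show ?thesis .
qed

lemma mult_adj_zero: assumes "M ** cmat_adj M = 0" shows "M = 0"
proof -
  have "inner (M ** cmat_adj M) (mat 1) = inner (cmat_adj M) (cmat_adj M)"
    by (simp add: inner_mult_adj)
  then have "inner (cmat_adj M) (cmat_adj M) = 0" using assms by simp
  then have "cmat_adj M = 0" by simp
  then show ?thesis by (metis adj_adj adj_zero)
qed

lemma mult_diff_left: "(A - B) ** C = A ** C - B ** (C :: 'a::ring_1^_^_)"
  by (simp add: vec_eq_iff matrix_matrix_mult_def sum_subtractf algebra_simps)
lemma mult_diff_right: "C ** (A - B) = C ** A - C ** (B :: 'a::ring_1^_^_)"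
  by (simp add: vec_eq_iff matrix_matrix_mult_def sum_subtractf algebra_simps)
lemma mult_add_left: "(A + B) ** C = A ** C + B ** (C :: 'a::ring_1^_^_)"
  by (simp add: vec_eq_iff matrix_matrix_mult_def sum.distrib algebra_simps)
lemma mult_uminus_left: "(- A) ** C = - (A ** (C :: 'a::ring_1^_^_))"
  by (simp add: vec_eq_iff matrix_matrix_mult_def sum_negf)
lemma mult_uminus_right: "C ** (- A) = - (C ** (A :: 'a::ring_1^_^_))"
  by (simp add: vec_eq_iff matrix_matrix_mult_def sum_negf)
lemma mult_scaleR_left: "(c *\<^sub>R A) ** C = c *\<^sub>R (A ** (C :: complex^_^_))"
  by (simp add: vec_eq_iff matrix_matrix_mult_def scaleR_sum_right)
lemma mult_scaleR_right: "C ** (c *\<^sub>R A) = c *\<^sub>R (C ** (A :: complex^_^_))"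
  by (simp add: vec_eq_iff matrix_matrix_mult_def scaleR_sum_right)

lemma pyth_left:
  fixes P :: "complex^'m^'m" and Z :: "complex^'n^'m"
  assumes h: "cmat_adj P = P" and i: "P ** P = P"
  shows "(norm Z)\<^sup>2 = (norm (P ** Z))\<^sup>2 + (norm ((mat 1 - P) ** Z))\<^sup>2"
proof -
  have z: "Z = P ** Z + (mat 1 - P) ** Z" by (simp add: mult_diff_left)
  have "inner (P ** Z) ((mat 1 - P) ** Z) = inner Z (cmat_adj P ** ((mat 1 - P) ** Z))"
    by (rule inner_mult_adj)
  also have "\<dots> = 0" by (simp add: h matrix_mul_assoc mult_diff_right i)
  finally have "orthogonal (P ** Z) ((mat 1 - P) ** Z)" by (simp add: orthogonal_def)
  then have "(norm (P ** Z + (mat 1 - P) ** Z))\<^sup>2 = (norm (P ** Z))\<^sup>2 + (norm ((mat 1 - P) ** Z))\<^sup>2"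
    by (rule norm_add_Pythagorean)
  then show ?thesis using z by simp
qed

lemma pyth_right:
  fixes Q :: "complex^'m^'m" and Z :: "complex^'m^'n"
  assumes h: "cmat_adj Q = Q" and i: "Q ** Q = Q"
  shows "(norm Z)\<^sup>2 = (norm (Z ** Q))\<^sup>2 + (norm (Z ** (mat 1 - Q)))\<^sup>2"
proof -
  have "(norm (cmat_adj Z))\<^sup>2 = (norm (Q ** cmat_adj Z))\<^sup>2 + (norm ((mat 1 - Q) ** cmat_adj Z))\<^sup>2"
    by (rule pyth_left[OF h i])
  moreover have "Q ** cmat_adj Z = cmat_adj (Z ** Q)" by (simp add: adj_mult h)
  moreover have "(mat 1 - Q) ** cmat_adj Z = cmat_adj (Z ** (mat 1 - Q))"
    by (simp add: adj_mult adj_diff h)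
  ultimately show ?thesis by (simp add: norm_adj)
qed

primrec mpow :: "complex^'n^'n \<Rightarrow> nat \<Rightarrow> complex^'n^'n" where
  "mpow T 0 = mat 1" | "mpow T (Suc k) = mpow T k ** T"

lemma mpow_comm: "T ** mpow T k = mpow T k ** T"
  by (induction k) (simp_all add: matrix_mul_assoc)

lemma mpow_herm: "cmat_adj T = T \<Longrightarrow> cmat_adj (mpow T k) = mpow T k"
  by (induction k) (simp_all add: adj_mult mpow_comm)

lemma linear_lmult: "linear (\<lambda>Z. (T::complex^'n^'m) ** (Z::complex^'p^'n))"
  by (rule linearI) (simp_all add: matrix_add_ldistrib mult_scaleR_right)

lemma penrose_exists: "\<exists>X. penrose (A::complex^'n^'m) X"
proof -
  define T where "T = cmat_adj A ** A"
  have Th: "cmat_adj T = T" by (simp add: T_def adj_mult)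
  define L where "L = (\<lambda>Z. T ** (Z::complex^'n^'n))"
  define S1 where "S1 = range (\<lambda>k. mpow T (Suc k))"
  define S2 where "S2 = range (\<lambda>k. mpow T (Suc (Suc k)))"
  have linL: "linear L" unfolding L_def by (rule linear_lmult)
  define W where "W = {Z. cmat_adj Z = Z \<and> (\<exists>Q. Z = Q ** T)}"
  have subW: "subspace W"
    unfolding subspace_def W_def
  proof (intro conjI ballI allI, goal_cases)
    case 1 show ?case by (auto intro: exI[of _ 0])
  next
    case (2 x y)
    then obtain Q1 Q2 where "x = Q1 ** T" "y = Q2 ** T" "cmat_adj x = x" "cmat_adj y = y" by auto
    then show ?case by (auto simp: adj_add mult_add_left intro!: exI[of _ "Q1 + Q2"])
  next
    case (3 c x)
    then obtain Q1 where "x = Q1 ** T" "cmat_adj x = x" by auto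
    then show ?case by (auto simp: adj_scaleR mult_scaleR_left intro!: exI[of _ "c *\<^sub>R Q1"])
  qed
  have S1W: "mpow T (Suc k) \<in> W" for k
  proof -
    have "cmat_adj (mpow T k ** T) = mpow T k ** T" by (simp add: adj_mult Th mpow_herm[OF Th] mpow_comm)
    then show ?thesis unfolding W_def by auto
  qed
  have "S1 \<subseteq> W" unfolding S1_def by (rule image_subsetI) (rule S1W)
  then have spW: "span S1 \<subseteq> W" using subW by (rule span_minimal)
  have injL: "inj_on L (span S1)"
  proof (rule inj_onI)
    fix x y assume x: "x \<in> span S1" and y: "y \<in> span S1" and e: "L x = L y"
    have "x - y \<in> span S1" using x y by (rule span_diff)
    then have "x - y \<in> W" using spW by auto
    then obtain Q where Z1: "cmat_adj (x - y) = x - y" and Z2: "x - y = Q ** T" unfolding W_def by auto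
    have Tz: "T ** (x - y) = 0" using e by (simp add: L_def mult_diff_right)
    have "(x - y) ** cmat_adj (x - y) = Q ** (T ** (x - y))"
      by (metis Z1 Z2 matrix_mul_assoc)
    then have "(x - y) ** cmat_adj (x - y) = 0" using Tz by simp
    then have "x - y = 0" by (rule mult_adj_zero)
    then show "x = y" by simp
  qed
  have Lk: "L (mpow T (Suc k)) = mpow T (Suc (Suc k))" for k
    by (simp add: L_def matrix_mul_assoc mpow_comm)
  have LS1: "L ` S1 = S2"
    by (simp only: S1_def S2_def image_image Lk)
  have "dim S2 = dim S1" using eucl.dim_image_eq[OF linL injL] LS1 by simp
  moreover have "S2 \<subseteq> S1"
  proof -
    have "mpow T (Suc (Suc k)) \<in> S1" for k unfolding S1_def by (rule range_eqI[of _ _ "Suc k"]) (rule refl)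
    then show ?thesis unfolding S2_def by (rule image_subsetI)
  qed
  ultimately have spe: "span S2 = span S1" by (intro eucl.dim_eq_span) auto
  have "T \<in> span S1" by (rule span_base) (auto simp: S1_def intro!: range_eqI[of _ _ 0])
  then have TS2: "T \<in> span S2" using spe by simp
  define W2 where "W2 = {Z. \<exists>B. cmat_adj B = B \<and> B ** T = T ** B \<and> Z = B ** T ** T}"
  have subW2: "subspace W2"
    unfolding subspace_def W2_def
  proof (intro conjI ballI allI, goal_cases)
    case 1 show ?case by (auto intro: exI[of _ 0])
  next
    case (2 x y)
    then obtain Q1 Q2 where "x = Q1 ** T ** T" "y = Q2 ** T ** T" "cmat_adj Q1 = Q1" "cmat_adj Q2 = Q2"
      "Q1 ** T = T ** Q1" "Q2 ** T = T ** Q2" by auto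
    then show ?case by (auto simp: adj_add mult_add_left matrix_add_ldistrib intro!: exI[of _ "Q1 + Q2"])
  next
    case (3 c x)
    then obtain Q1 where "x = Q1 ** T ** T" "cmat_adj Q1 = Q1" "Q1 ** T = T ** Q1" by auto
    then show ?case by (auto simp: adj_scaleR mult_scaleR_left mult_scaleR_right intro!: exI[of _ "c *\<^sub>R Q1"])
  qed
  have "S2 \<subseteq> W2" unfolding S2_def W2_def using mpow_herm[OF Th]
    by (auto simp: mpow_comm intro!: exI)
  then have "span S2 \<subseteq> W2" using subW2 by (rule span_minimal)
  then obtain B where Bh: "cmat_adj B = B" and BT: "B ** T = T ** B" and BTT: "T = B ** T ** T"
    using TS2 unfolding W2_def by auto
  define W0 where "W0 = B ** T - mat 1"
  have "(W0 ** cmat_adj A) ** cmat_adj (W0 ** cmat_adj A) = (W0 ** T) ** cmat_adj W0"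
    by (simp add: adj_mult matrix_mul_assoc T_def)
  also have "W0 ** T = 0" using BTT by (simp add: W0_def mult_diff_left)
  finally have "W0 ** cmat_adj A = 0" using mult_adj_zero by auto
  then have BTA: "B ** T ** cmat_adj A = cmat_adj A" by (simp add: W0_def mult_diff_left)
  then have "cmat_adj (B ** T ** cmat_adj A) = A" by (metis adj_adj)
  then have ATB: "A ** T ** B = A" by (simp add: adj_mult Th Bh matrix_mul_assoc)
  define X where "X = B ** cmat_adj A"
  have XA: "X ** A = B ** T" by (simp add: X_def T_def matrix_mul_assoc)
  have "penrose A X"
    unfolding penrose_def
  proof (intro conjI)
    show "A ** X ** A = A" using ATB BT by (simp add: XA flip: matrix_mul_assoc)
    show "X ** A ** X = X" using BTA BT
      by (simp add: XA) (metis X_def matrix_mul_assoc)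
    show "cmat_adj (A ** X) = A ** X" by (simp add: X_def adj_mult Bh matrix_mul_assoc)
    show "cmat_adj (X ** A) = X ** A" by (simp add: XA adj_mult Bh Th BT)
  qed
  then show ?thesis by blast
qed

lemma penrose_unique:
  assumes X: "penrose A X" and Y: "penrose A Y"
  shows "X = Y"
proof -
  from X have x1: "A ** X ** A = A" and x2: "X ** A ** X = X" and x3: "cmat_adj (A ** X) = A ** X"
    and x4: "cmat_adj (X ** A) = X ** A" by (auto simp: penrose_def)
  from Y have y1: "A ** Y ** A = A" and y2: "Y ** A ** Y = Y" and y3: "cmat_adj (A ** Y) = A ** Y"
    and y4: "cmat_adj (Y ** A) = Y ** A" by (auto simp: penrose_def)
  have "X = X ** cmat_adj (A ** X)" using x2 x3 by (simp add: matrix_mul_assoc)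
  also have "\<dots> = X ** cmat_adj X ** cmat_adj (A ** Y ** A)" using y1 by (simp add: adj_mult matrix_mul_assoc)
  also have "\<dots> = X ** cmat_adj (A ** X) ** cmat_adj (A ** Y)" by (simp add: adj_mult matrix_mul_assoc)
  also have "\<dots> = X ** A ** Y" using x3 y3 x2 by (simp add: matrix_mul_assoc)
  finally have 1: "X = X ** A ** Y" .
  have "Y = cmat_adj (Y ** A) ** Y" using y2 y4 by (simp add: matrix_mul_assoc)
  also have "\<dots> = cmat_adj (A ** X ** A) ** cmat_adj Y ** Y" using x1 by (simp add: adj_mult matrix_mul_assoc)
  also have "\<dots> = cmat_adj (X ** A) ** cmat_adj (Y ** A) ** Y" by (simp add: adj_mult matrix_mul_assoc)
  also have "\<dots> = X ** A ** Y" using x4 y4 y2 by (metis matrix_mul_assoc)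
  finally show ?thesis using 1 by simp
qed

lemma mp_penrose: "penrose A (mp_inv A)"
  unfolding mp_inv_def using penrose_exists[of A] penrose_unique[of A]
  by (metis theI)

lemma spec_bound: "norm ((A::complex^'n^'m) *v x) \<le> spec_norm A * norm x"
  unfolding spec_norm_def by (rule onorm) simp

lemma spec_nonneg: "0 \<le> spec_norm (A::complex^'n^'m)"
  unfolding spec_norm_def by (rule onorm_pos_le) simp

lemma spec_adj_bound: "norm (cmat_adj (A::complex^'n^'m) *v x) \<le> spec_norm A * norm x"
proof -
  define y where "y = cmat_adj A *v x"
  have "(norm y)\<^sup>2 = inner y y" by (simp add: power2_norm_eq_inner)
  also have "\<dots> = inner x (A *v y)" using inner_vec_adj[of "cmat_adj A" x y] by (simp only: adj_adj y_def[symmetric])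
  also have "\<dots> \<le> norm x * norm (A *v y)" by (rule norm_cauchy_schwarz)
  also have "\<dots> \<le> norm x * (spec_norm A * norm y)" by (rule mult_left_mono[OF spec_bound]) simp
  finally have h: "(norm y)\<^sup>2 \<le> (spec_norm A * norm x) * norm y" by (simp add: mult_ac)
  show ?thesis
  proof (cases "norm y = 0")
    case True then show ?thesis using spec_nonneg[of A] by (simp add: y_def)
  next
    case False
    then have "norm y > 0" by simp
    with h show ?thesis unfolding y_def[symmetric]
      by (simp add: power2_eq_square)
  qed
qed

lemma norm_sq_vec: "(norm (z::complex^'n))\<^sup>2 = (\<Sum>i\<in>UNIV. (cmod (z $ i))\<^sup>2)"
  by (simp add: norm_vec_def L2_set_def sum_nonneg)

lemma norm_sq_cols: "(norm (Z::complex^'n^'m))\<^sup>2 = (\<Sum>j\<in>UNIV. (norm (column j Z))\<^sup>2)"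
  by (simp add: norm_sq_entries norm_sq_vec column_def) (rule sum.swap)

lemma column_mult: "column j (M ** Z) = M *v column j (Z::complex^'p^'n)"
  by (simp add: vec_eq_iff column_def matrix_matrix_mult_def matrix_vector_mult_def)

lemma frob_mult_bound:
  fixes M :: "complex^'n^'m" and Z :: "complex^'p^'n"
  assumes b: "\<And>x. norm (M *v x) \<le> c * norm x" and c: "0 \<le> c"
  shows "norm (M ** Z) \<le> c * norm Z"
proof -
  have "(norm (M ** Z))\<^sup>2 = (\<Sum>j\<in>UNIV. (norm (M *v column j Z))\<^sup>2)"
    by (simp only: norm_sq_cols column_mult)
  also have "\<dots> \<le> (\<Sum>j\<in>UNIV. (c * norm (column j Z))\<^sup>2)"
    by (intro sum_mono power_mono b) simp
  also have "\<dots> = c\<^sup>2 * (\<Sum>j\<in>UNIV. (norm (column j Z))\<^sup>2)"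
    by (simp only: power_mult_distrib sum_distrib_left)
  also have "\<dots> = (c * norm Z)\<^sup>2"
    by (simp only: norm_sq_cols[symmetric] power_mult_distrib)
  finally show ?thesis by (rule power2_le_imp_le) (simp add: c)
qed

lemma div_le_aux:
  assumes "a \<le> s\<^sup>2 * b" "0 \<le> (b::real)" shows "a / s\<^sup>2 \<le> b"
proof (cases "s = 0")
  case True then show ?thesis using assms by simp
next
  case False
  then have sp: "s\<^sup>2 > 0" by simp
  have "a \<le> b * s\<^sup>2" using assms(1) by (simp only: mult.commute)
  then show ?thesis using sp by (simp only: pos_divide_le_eq)
qed

lemma main1:
  fixes A B :: "complex^'n^'m"
  defines "E \<equiv> B - A"
  shows "((norm (mp_inv A ** E))\<^sup>2 - (norm (mp_inv A ** E ** mp_inv B ** B))\<^sup>2) / (spec_norm A)\<^sup>2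
       + ((norm (E ** mp_inv B))\<^sup>2 - (norm (A ** mp_inv A ** E ** mp_inv B))\<^sup>2) / (spec_norm B)\<^sup>2
       + (norm (mp_inv B ** E ** mp_inv A))\<^sup>2 \<le> (norm (mp_inv B - mp_inv A))\<^sup>2"
proof -
  define X where "X = mp_inv A"
  define Y where "Y = mp_inv B"
  from mp_penrose[of A] have x1: "A ** X ** A = A" and x2: "X ** A ** X = X" and x3: "cmat_adj (A ** X) = A ** X"
    and x4: "cmat_adj (X ** A) = X ** A" by (auto simp: penrose_def X_def)
  from mp_penrose[of B] have y1: "B ** Y ** B = B" and y2: "Y ** B ** Y = Y" and y3: "cmat_adj (B ** Y) = B ** Y"
    and y4: "cmat_adj (Y ** B) = Y ** B" by (auto simp: penrose_def Y_def)
  have x1': "Z ** A ** X ** A = Z ** A" for Z :: "complex^'m^'p" by (metis x1 matrix_mul_assoc)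
  have x2': "Z ** X ** A ** X = Z ** X" for Z :: "complex^'n^'p" by (metis x2 matrix_mul_assoc)
  have y1': "Z ** B ** Y ** B = Z ** B" for Z :: "complex^'m^'p" by (metis y1 matrix_mul_assoc)
  have y2': "Z ** Y ** B ** Y = Z ** Y" for Z :: "complex^'n^'p" by (metis y2 matrix_mul_assoc)
  note rw = x1 x2 y1 y2 x1' x2' y1' y2' matrix_mul_assoc mult_diff_left mult_diff_right E_def
  define Q where "Q = A ** X"
  define P where "P = Y ** B"
  define D where "D = Y - X"
  have Qh: "cmat_adj Q = Q" "Q ** Q = Q" using x3 by (simp_all add: Q_def rw)
  have Ph: "cmat_adj P = P" "P ** P = P" using y4 by (simp_all add: P_def rw)
  have h1: "(norm D)\<^sup>2 = (norm (P ** D))\<^sup>2 + (norm ((mat 1 - P) ** D))\<^sup>2" by (rule pyth_left[OF Ph])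
  have h2: "(norm (P ** D))\<^sup>2 = (norm (P ** D ** Q))\<^sup>2 + (norm (P ** D ** (mat 1 - Q)))\<^sup>2" by (rule pyth_right[OF Qh])
  have h3: "(norm ((mat 1 - P) ** D))\<^sup>2 = (norm ((mat 1 - P) ** D ** Q))\<^sup>2 + (norm ((mat 1 - P) ** D ** (mat 1 - Q)))\<^sup>2"
    by (rule pyth_right[OF Qh])
  have e1: "P ** D ** Q = - (Y ** E ** X)" by (simp add: P_def D_def Q_def rw)
  have e2: "P ** D ** (mat 1 - Q) = Y ** (mat 1 - Q)" by (simp add: P_def D_def Q_def rw)
  have e3: "(mat 1 - P) ** D ** Q = - ((mat 1 - P) ** X)" by (simp add: P_def D_def Q_def rw)
  have e4: "(mat 1 - P) ** D ** (mat 1 - Q) = 0" by (simp add: P_def D_def Q_def rw)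
  have main: "(norm D)\<^sup>2 = (norm (Y ** E ** X))\<^sup>2 + (norm (Y ** (mat 1 - Q)))\<^sup>2 + (norm ((mat 1 - P) ** X))\<^sup>2"
    using h1 h2 h3 e1 e2 e3 e4 by simp
  have p1: "(norm (X ** E))\<^sup>2 = (norm (X ** E ** P))\<^sup>2 + (norm (X ** E ** (mat 1 - P)))\<^sup>2" by (rule pyth_right[OF Ph])
  have e5: "X ** E ** (mat 1 - P) = - (cmat_adj A ** (cmat_adj X ** (mat 1 - P)))"
  proof -
    have "cmat_adj A ** (cmat_adj X ** (mat 1 - P)) = X ** A ** (mat 1 - P)"
      using x4 by (simp add: matrix_mul_assoc adj_mult[symmetric])
    then show ?thesis by (simp add: P_def rw)
  qed
  have "norm (X ** E ** (mat 1 - P)) \<le> spec_norm A * norm (cmat_adj X ** (mat 1 - P))"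
    unfolding e5 norm_minus_cancel by (rule frob_mult_bound[OF spec_adj_bound spec_nonneg])
  also have "norm (cmat_adj X ** (mat 1 - P)) = norm ((mat 1 - P) ** X)"
    by (metis norm_adj adj_mult adj_adj adj_diff adj_id Ph(1))
  finally have "(norm (X ** E ** (mat 1 - P)))\<^sup>2 \<le> (spec_norm A)\<^sup>2 * (norm ((mat 1 - P) ** X))\<^sup>2"
    by (metis power_mono norm_ge_zero power_mult_distrib)
  then have t1: "((norm (X ** E))\<^sup>2 - (norm (X ** E ** Y ** B))\<^sup>2) / (spec_norm A)\<^sup>2 \<le> (norm ((mat 1 - P) ** X))\<^sup>2"
    using p1 by (intro div_le_aux) (auto simp: P_def matrix_mul_assoc)
  have p2: "(norm (E ** Y))\<^sup>2 = (norm (Q ** (E ** Y)))\<^sup>2 + (norm ((mat 1 - Q) ** (E ** Y)))\<^sup>2" by (rule pyth_left[OF Qh])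
  have e6: "(mat 1 - Q) ** (E ** Y) = cmat_adj (B ** (Y ** (mat 1 - Q)))"
  proof -
    have "cmat_adj (B ** (Y ** (mat 1 - Q))) = (mat 1 - Q) ** (B ** Y)"
      using y3 Qh(1) by (simp add: adj_mult adj_diff matrix_mul_assoc)
    then show ?thesis by (simp add: Q_def rw)
  qed
  have "norm ((mat 1 - Q) ** (E ** Y)) \<le> spec_norm B * norm (Y ** (mat 1 - Q))"
    unfolding e6 norm_adj by (rule frob_mult_bound[OF spec_bound spec_nonneg])
  then have "(norm ((mat 1 - Q) ** (E ** Y)))\<^sup>2 \<le> (spec_norm B)\<^sup>2 * (norm (Y ** (mat 1 - Q)))\<^sup>2"
    by (metis power_mono norm_ge_zero power_mult_distrib)
  then have t2: "((norm (E ** Y))\<^sup>2 - (norm (A ** X ** E ** Y))\<^sup>2) / (spec_norm B)\<^sup>2 \<le> (norm (Y ** (mat 1 - Q)))\<^sup>2"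
    using p2 by (intro div_le_aux) (auto simp: Q_def matrix_mul_assoc)
  show ?thesis using main t1 t2 unfolding X_def Y_def D_def by linarith
qed

theorem theorem3p6:
  fixes A B :: "complex ^'n ^'m"
  defines "E \<equiv> B - A"
  defines "\<alpha>1 \<equiv> ((frob_norm (mp_inv A ** E))\<^sup>2 - (frob_norm (mp_inv A ** E ** mp_inv B ** B))\<^sup>2)
                     / (spec_norm A)\<^sup>2
              + ((frob_norm (E ** mp_inv B))\<^sup>2 - (frob_norm (A ** mp_inv A ** E ** mp_inv B))\<^sup>2)
                     / (spec_norm B)\<^sup>2"
  defines "\<alpha>2 \<equiv> ((frob_norm (E ** mp_inv A))\<^sup>2 - (frob_norm (B ** mp_inv B ** E ** mp_inv A))\<^sup>2)
                     / (spec_norm A)\<^sup>2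
              + ((frob_norm (mp_inv B ** E))\<^sup>2 - (frob_norm (mp_inv B ** E ** mp_inv A ** A))\<^sup>2)
                     / (spec_norm B)\<^sup>2"
  shows "(frob_norm (mp_inv B - mp_inv A))\<^sup>2 \<ge>
           max (\<alpha>1 + (frob_norm (mp_inv B ** E ** mp_inv A))\<^sup>2)
               (\<alpha>2 + (frob_norm (mp_inv A ** E ** mp_inv B))\<^sup>2)"
proof (rule max.boundedI)
  show "\<alpha>1 + (frob_norm (mp_inv B ** E ** mp_inv A))\<^sup>2 \<le> (frob_norm (mp_inv B - mp_inv A))\<^sup>2"
    using main1[of A B] unfolding \<alpha>1_def E_def frob_eq_norm by simp
  have AB: "A - B = - E" by (simp add: E_def)
  have "norm (mp_inv A - mp_inv B) = norm (mp_inv B - mp_inv A)" by (rule norm_minus_commute)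
  then show "\<alpha>2 + (frob_norm (mp_inv A ** E ** mp_inv B))\<^sup>2 \<le> (frob_norm (mp_inv B - mp_inv A))\<^sup>2"
    using main1[of B A] unfolding \<alpha>2_def frob_eq_norm AB
    by (simp add: mult_uminus_left mult_uminus_right)
qed

end
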